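(* Let $\mathcal{M}=((X,\mathcal{C}_R),\mathcal{V})$ be a quasi-discrete closure model based on $R$ that is finitely closed and finitely backward closed, viewed as the $\mathcal{T}$-coalgebra $(X,\eta)$ with $\eta(x)=(\mathcal{V}^{-1}(x),\vec{\mathcal{C}}(x),\overleftarrow{\mathcal{C}}(x))$. For all $x_1,x_2\in X$: $x_1\simeq x_2$ iff $x_1$ and $x_2$ are behaviourally equivalent with respect to $\mathcal{T}$.
   Context: $\mathcal{C}_R(A)=A\cup\{x\mid\exists a\in A.\ aRx\}$, $\vec{\mathcal{C}}(x)=\mathcal{C}_R(\{x\})$, $\overleftarrow{\mathcal{C}}(x)=\mathcal{C}_{R^{-1}}(\{x\})$, $\mathcal{V}^{-1}(x)=\{p\in AP\mid x\in\mathcal{V}(p)\}$. Class-based bisimulation: a non-empty equivalence relation $B$ such that $(x_1,x_2)\in B$ implies $\mathcal{V}^{-1}(x_1)=\mathcal{V}^{-1}(x_2)$ and for all $C\in X/B$, $\vec{\mathcal{C}}(x_1)\cap C\neq\emptyset\iff\vec{\mathcal{C}}(x_2)\cap C\neq\emptyset$ and $\overleftarrow{\mathcal{C}}(x_1)\cap C\neq\emptyset\iff\overleftarrow{\mathcal{C}}(x_2)\cap C\neq\emptyset$; $\simeq$ is the union of such relations. $\mathcal{T}X=\mathcal{P}_{fin}(AP)\times\mathcal{P}_{fin}(X)\times\mathcal{P}_{fin}(X)$, $(\mathcal{T}f)(v,z,z')=(v,f[z],f[z'])$; behavioural equivalence means equal images under the unique homomorphism to the final $\mathcal{T}$-coalgebra.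 *)

theory Defs
  imports Main
begin

definition qdcm :: "'x set \<Rightarrow> ('x \<times> 'x) set \<Rightarrow> ('ap \<Rightarrow> 'x set) \<Rightarrow> bool" where
  "qdcm X R V \<longleftrightarrow> R \<subseteq> X \<times> X \<and> (\<forall>p. V p \<subseteq> X)"

definition closR :: "('x \<times> 'x) set \<Rightarrow> 'x set \<Rightarrow> 'x set" where
  "closR R A = A \<union> {x. \<exists>a\<in>A. (a, x) \<in> R}"

definition fwd_clos :: "('x \<times> 'x) set \<Rightarrow> 'x \<Rightarrow> 'x set" where
  "fwd_clos R x = closR R {x}"

definition bwd_clos :: "('x \<times> 'x) set \<Rightarrow> 'x \<Rightarrow> 'x set" where
  "bwd_clos R x = closR (R\<inverse>) {x}"

definition Vinv :: "('ap \<Rightarrow> 'x set) \<Rightarrow> 'x \<Rightarrow> 'ap set" where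
  "Vinv V x = {p. x \<in> V p}"

definition finitely_closed :: "'x set \<Rightarrow> ('x \<times> 'x) set \<Rightarrow> bool" where
  "finitely_closed X R \<longleftrightarrow> (\<forall>x\<in>X. finite (fwd_clos R x))"

definition finitely_backward_closed :: "'x set \<Rightarrow> ('x \<times> 'x) set \<Rightarrow> bool" where
  "finitely_backward_closed X R \<longleftrightarrow> (\<forall>x\<in>X. finite (bwd_clos R x))"

definition cb_bisim :: "'x set \<Rightarrow> ('x \<times> 'x) set \<Rightarrow> ('ap \<Rightarrow> 'x set) \<Rightarrow> ('x \<times> 'x) set \<Rightarrow> bool" where
  "cb_bisim X R V B \<longleftrightarrow> B \<noteq> {} \<and> equiv X B \<and>
     (\<forall>(x1, x2)\<in>B. Vinv V x1 = Vinv V x2 \<and>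
        (\<forall>C\<in>X // B.
           (fwd_clos R x1 \<inter> C \<noteq> {} \<longleftrightarrow> fwd_clos R x2 \<inter> C \<noteq> {}) \<and>
           (bwd_clos R x1 \<inter> C \<noteq> {} \<longleftrightarrow> bwd_clos R x2 \<inter> C \<noteq> {})))"

definition cb_bisimilar :: "'x set \<Rightarrow> ('x \<times> 'x) set \<Rightarrow> ('ap \<Rightarrow> 'x set) \<Rightarrow> ('x \<times> 'x) set" where
  "cb_bisimilar X R V = \<Union> {B. cb_bisim X R V B}"

definition Tobj :: "'y set \<Rightarrow> ('ap set \<times> 'y set \<times> 'y set) set" where
  "Tobj Y = {(v, z, z'). finite v \<and> finite z \<and> z \<subseteq> Y \<and> finite z' \<and> z' \<subseteq> Y}"

definition Tmap :: "('x \<Rightarrow> 'y) \<Rightarrow> ('ap set \<times> 'x set \<times> 'x set) \<Rightarrow> ('ap set \<times> 'y set \<times> 'y set)" where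
  "Tmap f t = (case t of (v, z, z') \<Rightarrow> (v, f ` z, f ` z'))"

definition T_coalg :: "'y set \<Rightarrow> ('y \<Rightarrow> 'ap set \<times> 'y set \<times> 'y set) \<Rightarrow> bool" where
  "T_coalg Y \<gamma> \<longleftrightarrow> (\<forall>y\<in>Y. \<gamma> y \<in> Tobj Y)"

definition T_hom :: "'x set \<Rightarrow> ('x \<Rightarrow> 'ap set \<times> 'x set \<times> 'x set) \<Rightarrow>
                     'y set \<Rightarrow> ('y \<Rightarrow> 'ap set \<times> 'y set \<times> 'y set) \<Rightarrow> ('x \<Rightarrow> 'y) \<Rightarrow> bool" where
  "T_hom X \<eta> Y \<gamma> f \<longleftrightarrow> (\<forall>x\<in>X. f x \<in> Y \<and> Tmap f (\<eta> x) = \<gamma> (f x))"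

definition eta :: "('x \<times> 'x) set \<Rightarrow> ('ap \<Rightarrow> 'x set) \<Rightarrow> 'x \<Rightarrow> 'ap set \<times> 'x set \<times> 'x set" where
  "eta R V x = (Vinv V x, fwd_clos R x, bwd_clos R x)"

text \<open>Behavioural equivalence: identified by some T-coalgebra homomorphism out of (X, eta).
  (Equivalent to equality of images under the unique map into the final T-coalgebra;
  every homomorphic image of (X, eta) is isomorphic to one carried by a set of
  subsets of X, so the target carrier type 'x set suffices.)\<close>

definition beh_equiv :: "'x set \<Rightarrow> ('x \<times> 'x) set \<Rightarrow> ('ap \<Rightarrow> 'x set) \<Rightarrow> 'x \<Rightarrow> 'x \<Rightarrow> bool" where
  "beh_equiv X R V x1 x2 \<longleftrightarrow>
     (\<exists>(Y :: 'x set set) \<gamma> f. T_coalg Y \<gamma> \<and> T_hom X (eta R V) Y \<gamma> f \<and> f x1 = f x2)"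

end

theory Submission
  imports Defs
begin

lemma fwd_sub: "R \<subseteq> X \<times> X \<Longrightarrow> x \<in> X \<Longrightarrow> fwd_clos R x \<subseteq> X"
  unfolding fwd_clos_def closR_def by auto

lemma bwd_sub: "R \<subseteq> X \<times> X \<Longrightarrow> x \<in> X \<Longrightarrow> bwd_clos R x \<subseteq> X"
  unfolding bwd_clos_def closR_def by auto

lemma img_classes:
  assumes "equiv X B" "S \<subseteq> X"
  shows "(\<lambda>y. B `` {y}) ` S = {C \<in> X // B. S \<inter> C \<noteq> {}}"
proof
  show "(\<lambda>y. B `` {y}) ` S \<subseteq> {C \<in> X // B. S \<inter> C \<noteq> {}}"
  proof
    fix C assume "C \<in> (\<lambda>y. B `` {y}) ` S"
    then obtain y where y: "y \<in> S" "C = B `` {y}" by auto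
    have "y \<in> C" using y assms equiv_class_self by fastforce
    moreover have "C \<in> X // B" using y assms by (auto intro: quotientI)
    ultimately show "C \<in> {C \<in> X // B. S \<inter> C \<noteq> {}}" using y by auto
  qed
next
  show "{C \<in> X // B. S \<inter> C \<noteq> {}} \<subseteq> (\<lambda>y. B `` {y}) ` S"
  proof
    fix C assume "C \<in> {C \<in> X // B. S \<inter> C \<noteq> {}}"
    then obtain y where y: "y \<in> S" "y \<in> C" "C \<in> X // B" by blast
    then obtain a where a0: "a \<in> X" "C = B `` {a}" by (auto elim: quotientE)
    have a: "a \<in> X" "C = B `` {a}" "y \<in> S" "y \<in> C" using a0 y by auto
    then have "(a, y) \<in> B" by auto
    then have "B `` {y} = B `` {a}" using assms(1)
      by (metis equiv_class_eq_iff)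
    then show "C \<in> (\<lambda>y. B `` {y}) ` S" using a by auto
  qed
qed

theorem corollary1:
  fixes X :: "'x set" and R :: "('x \<times> 'x) set" and V :: "'ap \<Rightarrow> 'x set"
  assumes "qdcm X R V"
    and "finitely_closed X R"
    and "finitely_backward_closed X R"
    and "\<forall>x\<in>X. finite (Vinv V x)"
    and "x1 \<in> X" and "x2 \<in> X"
  shows "(x1, x2) \<in> cb_bisimilar X R V \<longleftrightarrow> beh_equiv X R V x1 x2"
proof
  have RX: "R \<subseteq> X \<times> X" using assms(1) unfolding qdcm_def by auto
  assume "(x1, x2) \<in> cb_bisimilar X R V"
  then obtain B where B: "cb_bisim X R V B" "(x1, x2) \<in> B"
    unfolding cb_bisimilar_def by blast
  have eq: "equiv X B" using B(1) unfolding cb_bisim_def by (elim conjE)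
  have all: "\<forall>(x1, x2)\<in>B. Vinv V x1 = Vinv V x2 \<and>
        (\<forall>C\<in>X // B.
           (fwd_clos R x1 \<inter> C \<noteq> {} \<longleftrightarrow> fwd_clos R x2 \<inter> C \<noteq> {}) \<and>
           (bwd_clos R x1 \<inter> C \<noteq> {} \<longleftrightarrow> bwd_clos R x2 \<inter> C \<noteq> {}))"
    using B(1) unfolding cb_bisim_def by (elim conjE)
  define f where "f = (\<lambda>y. B `` {y})"
  define \<gamma> where "\<gamma> = (\<lambda>C. Tmap f (eta R V (SOME x. x \<in> X \<and> C = f x)))"
  have key: "Tmap f (eta R V x) = Tmap f (eta R V x')" if "(x, x') \<in> B" for x x'
  proof -
    have x: "x \<in> X" "x' \<in> X" using that eq unfolding equiv_def refl_on_def by auto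
    have c: "Vinv V x = Vinv V x'"
      "\<forall>C\<in>X // B. (fwd_clos R x \<inter> C \<noteq> {} \<longleftrightarrow> fwd_clos R x' \<inter> C \<noteq> {}) \<and>
           (bwd_clos R x \<inter> C \<noteq> {} \<longleftrightarrow> bwd_clos R x' \<inter> C \<noteq> {})"
      using bspec[OF all that] by simp_all
    have s1: "{C \<in> X // B. fwd_clos R x \<inter> C \<noteq> {}} = {C \<in> X // B. fwd_clos R x' \<inter> C \<noteq> {}}"
      using c(2) by (intro Collect_cong) auto
    have s2: "{C \<in> X // B. bwd_clos R x \<inter> C \<noteq> {}} = {C \<in> X // B. bwd_clos R x' \<inter> C \<noteq> {}}"
      using c(2) by (intro Collect_cong) auto
    have "f ` fwd_clos R x = f ` fwd_clos R x'"
      unfolding f_def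
      using img_classes[OF eq fwd_sub[OF RX x(1)]] img_classes[OF eq fwd_sub[OF RX x(2)]] s1
      by simp
    moreover have "f ` bwd_clos R x = f ` bwd_clos R x'"
      unfolding f_def
      using img_classes[OF eq bwd_sub[OF RX x(1)]] img_classes[OF eq bwd_sub[OF RX x(2)]] s2
      by simp
    ultimately show ?thesis using c(1) unfolding Tmap_def eta_def by simp
  qed
  have hom: "T_hom X (eta R V) (X // B) \<gamma> f"
    unfolding T_hom_def
  proof
    fix x assume x: "x \<in> X"
    have fx: "f x \<in> X // B" unfolding f_def using x by (rule quotientI)
    have "\<exists>x'. x' \<in> X \<and> f x = f x'" using x by auto
    then have s: "(SOME x'. x' \<in> X \<and> f x = f x') \<in> X \<and> f x = f (SOME x'. x' \<in> X \<and> f x = f x')"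
      by (rule someI_ex)
    then have "(x, SOME x'. x' \<in> X \<and> f x = f x') \<in> B"
      using eq_equiv_class_iff[OF eq x conjunct1[OF s]] conjunct2[OF s] unfolding f_def by simp
    then have "Tmap f (eta R V x) = Tmap f (eta R V (SOME x'. x' \<in> X \<and> f x = f x'))"
      by (rule key)
    then show "f x \<in> X // B \<and> Tmap f (eta R V x) = \<gamma> (f x)"
      using fx unfolding \<gamma>_def by simp
  qed
  have coal: "T_coalg (X // B) \<gamma>"
    unfolding T_coalg_def
  proof
    fix C assume C: "C \<in> X // B"
    then obtain x where x: "x \<in> X" "C = f x" unfolding f_def by (auto elim: quotientE)
    have q: "f ` S \<subseteq> X // B" if "S \<subseteq> X" for S
      unfolding f_def using that by (auto intro: quotientI)
    have fin: "finite (fwd_clos R x)" "finite (bwd_clos R x)" "finite (Vinv V x)"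
      using x(1) assms(2,3,4) unfolding finitely_closed_def finitely_backward_closed_def by auto
    have "Tmap f (eta R V x) \<in> Tobj (X // B)"
      using fin q[OF fwd_sub[OF RX x(1)]] q[OF bwd_sub[OF RX x(1)]]
      unfolding Tmap_def eta_def Tobj_def by simp
    moreover have "Tmap f (eta R V x) = \<gamma> (f x)" using hom x(1) unfolding T_hom_def by blast
    ultimately show "\<gamma> C \<in> Tobj (X // B)" using x(2) by simp
  qed
  have "f x1 = f x2" unfolding f_def using B(2) equiv_class_eq_iff[OF eq] by simp
  then show "beh_equiv X R V x1 x2" unfolding beh_equiv_def using coal hom by (intro exI[of _ "X // B"] exI[of _ \<gamma>] exI[of _ f]) simp
next
  have RX: "R \<subseteq> X \<times> X" using assms(1) unfolding qdcm_def by auto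
  assume "beh_equiv X R V x1 x2"
  then obtain Y :: "'x set set" and \<gamma> f where h: "T_hom X (eta R V) Y \<gamma> f" "f x1 = f x2"
    unfolding beh_equiv_def by blast
  define B where "B = {(x, x'). x \<in> X \<and> x' \<in> X \<and> f x = f x'}"
  have eq: "equiv X B" unfolding B_def equiv_def refl_on_def sym_def trans_def by auto
  have "cb_bisim X R V B"
    unfolding cb_bisim_def
  proof (intro conjI)
    show "B \<noteq> {}" using assms(5) unfolding B_def by auto
    show "equiv X B" by (rule eq)
    show "\<forall>(x, x')\<in>B. Vinv V x = Vinv V x' \<and>
        (\<forall>C\<in>X // B.
           (fwd_clos R x \<inter> C \<noteq> {} \<longleftrightarrow> fwd_clos R x' \<inter> C \<noteq> {}) \<and>
           (bwd_clos R x \<inter> C \<noteq> {} \<longleftrightarrow> bwd_clos R x' \<inter> C \<noteq> {}))"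
    proof (clarify)
      fix x x' assume "(x, x') \<in> B"
      then have x: "x \<in> X" "x' \<in> X" "f x = f x'" unfolding B_def by auto
      have t: "Tmap f (eta R V x) = \<gamma> (f x)" "Tmap f (eta R V x') = \<gamma> (f x')"
        using h(1) x(1,2) unfolding T_hom_def by blast+
      have "Tmap f (eta R V x) = Tmap f (eta R V x')" using t x(3) by simp
      then have e: "Vinv V x = Vinv V x'" "f ` fwd_clos R x = f ` fwd_clos R x'"
        "f ` bwd_clos R x = f ` bwd_clos R x'"
        unfolding Tmap_def eta_def by simp_all
      have gen: "S \<inter> C \<noteq> {} \<longleftrightarrow> S' \<inter> C \<noteq> {}"
        if hyp: "S \<subseteq> X" "S' \<subseteq> X" "f ` S = f ` S'" "C \<in> X // B" for S S' C
      proof -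
        obtain a where a: "a \<in> X" "C = B `` {a}" using hyp(4) by (auto elim: quotientE)
        have "C = {y \<in> X. f y = f a}" using a unfolding B_def by auto
        then have tt: "\<And>T. T \<subseteq> X \<Longrightarrow> T \<inter> C \<noteq> {} \<longleftrightarrow> f a \<in> f ` T" by auto
        show ?thesis using tt[OF hyp(1)] tt[OF hyp(2)] hyp(3) by simp
      qed
      show "Vinv V x = Vinv V x' \<and>
        (\<forall>C\<in>X // B.
           (fwd_clos R x \<inter> C \<noteq> {} \<longleftrightarrow> fwd_clos R x' \<inter> C \<noteq> {}) \<and>
           (bwd_clos R x \<inter> C \<noteq> {} \<longleftrightarrow> bwd_clos R x' \<inter> C \<noteq> {}))"
        using e(1) gen[OF fwd_sub[OF RX x(1)] fwd_sub[OF RX x(2)] e(2)]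
          gen[OF bwd_sub[OF RX x(1)] bwd_sub[OF RX x(2)] e(3)] by simp
    qed
  qed
  moreover have "(x1, x2) \<in> B" using assms(5,6) h(2) unfolding B_def by auto
  ultimately show "(x1, x2) \<in> cb_bisimilar X R V" unfolding cb_bisimilar_def by blast
qed

end
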